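(* Let $P,Q,R\in W^{(l)}\setminus\{0\}$ with $[P,Q]_{\rho,\sigma}=\ell_{\rho,\sigma}(R)$, where $(\rho,\sigma)\in\mathfrak V$ and $\sigma\le0$. (1) If $\mathrm{st}_{\rho,\sigma}(P)$ and $\mathrm{st}_{\rho,\sigma}(Q)$ are not aligned, then $\mathrm{st}_{\rho,\sigma}(P)+\mathrm{st}_{\rho,\sigma}(Q)-(1,1)=\mathrm{st}_{\rho,\sigma}(R)$. (2) If $\mathrm{en}_{\rho,\sigma}(P)$ and $\mathrm{en}_{\rho,\sigma}(Q)$ are not aligned, then $\mathrm{en}_{\rho,\sigma}(P)+\mathrm{en}_{\rho,\sigma}(Q)-(1,1)=\mathrm{en}_{\rho,\sigma}(R)$.
   Context: $K$ is a field of characteristic zero, $l\in\mathbb{N}$. $W^{(l)}$ is the associative $K$-algebra with $K$-basis $\{X^{i/l}Y^j:i\in\mathbb{Z},j\in\mathbb{N}_0\}$, powers of $X$ multiplying as Laurent monomials and $[Y,X^\alpha]=\alpha X^{\alpha-1}$ for $\alpha\in\frac1l\mathbb{Z}$. $\Psi^{(l)}(X^{i/l}Y^j)=x^{i/l}y^j\in K[x^{\pm1/l},y]$ ($K$-linear); supports are sets of exponents with nonzero coefficient. $\mathfrak V=\{(\rho,\sigma)\in\mathbb{Z}^2:\gcd(\rho,\sigma)=1,\rho+\sigma>0\}$. For $P\ne0$, $v_{\rho,\sigma}(P)=\max\{\rho a+\sigma b:(a,b)\in\mathrm{Supp}(P)\}$, $\ell_{\rho,\sigma}(P)$ = sum of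 terms of $\Psi^{(l)}(P)$ attaining it. $\mathrm{st}_{\rho,\sigma}(P)$: among points $(a,b)\in\mathrm{Supp}(\ell_{\rho,\sigma}(P))$ maximizing $a-b$, the one with largest $a$; $\mathrm{en}_{\rho,\sigma}(P)$: among those maximizing $b-a$, the one with largest $b$. $[P,Q]_{\rho,\sigma}:=0$ if $[P,Q]=0$ or $v_{\rho,\sigma}([P,Q])<v_{\rho,\sigma}(P)+v_{\rho,\sigma}(Q)-(\rho+\sigma)$, and $:=\ell_{\rho,\sigma}([P,Q])$ otherwise. Vectors $(a_1,a_2),(b_1,b_2)$ are aligned if $a_1b_2-a_2b_1=0$. *)

theory Defs
  imports Complex_Main "HOL-Library.Product_Plus"
begin

text \<open>An element of W^(l) is a finitely supported coefficient function
  c :: int \<times> nat \<Rightarrow> 'a, where c (i,j) is the coefficient of X^(i/l) Y^j.\<close>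

definition wsupp :: "(int \<times> nat \<Rightarrow> 'a::zero) \<Rightarrow> (int \<times> nat) set" where
  "wsupp P = {k. P k \<noteq> 0}"

definition is_W :: "(int \<times> nat \<Rightarrow> 'a::zero) \<Rightarrow> bool" where
  "is_W P \<longleftrightarrow> finite (wsupp P)"

text \<open>Y^j X^(i/l) = sum_m (j choose m) (i/l)(i/l-1)...(i/l-m+1) X^(i/l - m) Y^(j-m).\<close>
definition wcoef :: "nat \<Rightarrow> int \<Rightarrow> nat \<Rightarrow> nat \<Rightarrow> 'a::field_char_0" where
  "wcoef l i j m = of_nat (j choose m) *
      of_rat (\<Prod>t<m. (of_int i / of_nat l - of_nat t :: rat))"

definition wmult :: "nat \<Rightarrow> (int \<times> nat \<Rightarrow> 'a::field_char_0) \<Rightarrow> (int \<times> nat \<Rightarrow> 'a)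
    \<Rightarrow> (int \<times> nat \<Rightarrow> 'a)" where
  "wmult l P Q = (\<lambda>k. \<Sum>p\<in>wsupp P. \<Sum>q\<in>wsupp Q. \<Sum>m\<in>{..snd p}.
      (if (fst p + fst q - int m * int l, snd p - m + snd q) = k
       then P p * Q q * wcoef l (fst q) (snd p) m else 0))"

definition wcomm :: "nat \<Rightarrow> (int \<times> nat \<Rightarrow> 'a::field_char_0) \<Rightarrow> (int \<times> nat \<Rightarrow> 'a)
    \<Rightarrow> (int \<times> nat \<Rightarrow> 'a)" where
  "wcomm l P Q = (\<lambda>k. wmult l P Q k - wmult l Q P k)"

definition wpt :: "nat \<Rightarrow> int \<times> nat \<Rightarrow> rat \<times> rat" where
  "wpt l k = (of_int (fst k) / of_nat l, of_nat (snd k))"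

definition Supp :: "nat \<Rightarrow> (int \<times> nat \<Rightarrow> 'a::zero) \<Rightarrow> (rat \<times> rat) set" where
  "Supp l P = wpt l ` wsupp P"

definition wval :: "int \<Rightarrow> int \<Rightarrow> rat \<times> rat \<Rightarrow> rat" where
  "wval \<rho> \<sigma> p = of_int \<rho> * fst p + of_int \<sigma> * snd p"

definition vdeg :: "nat \<Rightarrow> int \<Rightarrow> int \<Rightarrow> (int \<times> nat \<Rightarrow> 'a::zero) \<Rightarrow> rat" where
  "vdeg l \<rho> \<sigma> P = Max (wval \<rho> \<sigma> ` Supp l P)"

text \<open>Leading form ell_{rho,sigma}(P) (as coefficient function, i.e. via the
  injective map Psi^(l)).\<close>
definition lead :: "nat \<Rightarrow> int \<Rightarrow> int \<Rightarrow> (int \<times> nat \<Rightarrow> 'a::zero) \<Rightarrow> (int \<times> nat \<Rightarrow> 'a)" where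
  "lead l \<rho> \<sigma> P = (\<lambda>k. if wval \<rho> \<sigma> (wpt l k) = vdeg l \<rho> \<sigma> P then P k else 0)"

definition st_of :: "(rat \<times> rat) set \<Rightarrow> rat \<times> rat" where
  "st_of S = (THE p. p \<in> S \<and> (\<forall>q\<in>S. fst q - snd q \<le> fst p - snd p) \<and>
       (\<forall>q\<in>S. fst q - snd q = fst p - snd p \<longrightarrow> fst q \<le> fst p))"

definition en_of :: "(rat \<times> rat) set \<Rightarrow> rat \<times> rat" where
  "en_of S = (THE p. p \<in> S \<and> (\<forall>q\<in>S. snd q - fst q \<le> snd p - fst p) \<and>
       (\<forall>q\<in>S. snd q - fst q = snd p - fst p \<longrightarrow> snd q \<le> snd p))"

definition wst :: "nat \<Rightarrow> int \<Rightarrow> int \<Rightarrow> (int \<times> nat \<Rightarrow> 'a::zero) \<Rightarrow> rat \<times> rat" where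
  "wst l \<rho> \<sigma> P = st_of (Supp l (lead l \<rho> \<sigma> P))"

definition wen :: "nat \<Rightarrow> int \<Rightarrow> int \<Rightarrow> (int \<times> nat \<Rightarrow> 'a::zero) \<Rightarrow> rat \<times> rat" where
  "wen l \<rho> \<sigma> P = en_of (Supp l (lead l \<rho> \<sigma> P))"

definition wbracket :: "nat \<Rightarrow> int \<Rightarrow> int \<Rightarrow> (int \<times> nat \<Rightarrow> 'a::field_char_0)
    \<Rightarrow> (int \<times> nat \<Rightarrow> 'a) \<Rightarrow> (int \<times> nat \<Rightarrow> 'a)" where
  "wbracket l \<rho> \<sigma> P Q =
     (if wcomm l P Q = (\<lambda>_. 0) \<or>
         vdeg l \<rho> \<sigma> (wcomm l P Q) < vdeg l \<rho> \<sigma> P + vdeg l \<rho> \<sigma> Q - of_int (\<rho> + \<sigma>)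
      then (\<lambda>_. 0) else lead l \<rho> \<sigma> (wcomm l P Q))"

definition aligned :: "rat \<times> rat \<Rightarrow> rat \<times> rat \<Rightarrow> bool" where
  "aligned a b \<longleftrightarrow> fst a * snd b - snd a * fst b = 0"

end

theory Submission
  imports Defs
begin

definition wv :: "nat \<Rightarrow> int \<Rightarrow> int \<Rightarrow> int \<times> nat \<Rightarrow> rat" where
  "wv l \<rho> \<sigma> k = wval \<rho> \<sigma> (wpt l k)"

lemma wv_simp: "wv l \<rho> \<sigma> k = of_int \<rho> * (of_int (fst k) / of_nat l) + of_int \<sigma> * of_nat (snd k)"
  by (simp add: wv_def wval_def wpt_def)

lemma wv_target:
  assumes "l > 0" "m \<le> snd p"
  shows "wv l \<rho> \<sigma> (fst p + fst q - int m * int l, snd p - m + snd q)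
       = wv l \<rho> \<sigma> p + wv l \<rho> \<sigma> q - of_nat m * of_int (\<rho> + \<sigma>)"
proof -
  have "(of_int (fst p + fst q - int m * int l) / of_nat l :: rat)
        = of_int (fst p) / of_nat l + of_int (fst q) / of_nat l - of_nat m"
    using assms(1) by (simp add: field_simps)
  moreover have "(of_nat (snd p - m + snd q) :: rat) = of_nat (snd p) - of_nat m + of_nat (snd q)"
    using assms(2) by (simp add: of_nat_diff)
  ultimately have "wv l \<rho> \<sigma> (fst p + fst q - int m * int l, snd p - m + snd q)
     = of_int \<rho> * (of_int (fst p) / of_nat l + of_int (fst q) / of_nat l - of_nat m)
       + of_int \<sigma> * (of_nat (snd p) - of_nat m + of_nat (snd q))"
    by (simp only: wv_simp fst_conv snd_conv)
  also have "\<dots> = wv l \<rho> \<sigma> p + wv l \<rho> \<sigma> q - of_nat m * of_int (\<rho> + \<sigma>)"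
    by (simp add: wv_simp algebra_simps)
  finally show ?thesis .
qed

lemma vdeg_ge:
  assumes "finite (wsupp F)" "F k \<noteq> 0"
  shows "wv l \<rho> \<sigma> k \<le> vdeg l \<rho> \<sigma> F"
  unfolding vdeg_def wv_def
  by (rule Max_ge) (use assms in \<open>auto simp: Supp_def wsupp_def\<close>)

lemma vdeg_attained:
  assumes "finite (wsupp F)" "F \<noteq> (\<lambda>_. 0)"
  shows "\<exists>k. F k \<noteq> 0 \<and> wv l \<rho> \<sigma> k = vdeg l \<rho> \<sigma> F"
proof -
  have ne: "wval \<rho> \<sigma> ` Supp l F \<noteq> {}" using assms(2) by (auto simp: Supp_def wsupp_def)
  have "vdeg l \<rho> \<sigma> F \<in> wval \<rho> \<sigma> ` Supp l F"
    unfolding vdeg_def by (rule Max_in) (use assms ne in \<open>auto simp: Supp_def\<close>)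
  then obtain k where "k \<in> wsupp F" "vdeg l \<rho> \<sigma> F = wval \<rho> \<sigma> (wpt l k)"
    by (auto simp: Supp_def)
  then show ?thesis by (intro exI[of _ k]) (auto simp: wsupp_def wv_def)
qed

lemma vdeg_eq:
  assumes "finite (wsupp F)" "F k0 \<noteq> 0" "wv l \<rho> \<sigma> k0 = V"
    "\<And>k. F k \<noteq> 0 \<Longrightarrow> wv l \<rho> \<sigma> k \<le> V"
  shows "vdeg l \<rho> \<sigma> F = V"
  unfolding vdeg_def
proof (rule Max_eqI)
  show "finite (wval \<rho> \<sigma> ` Supp l F)" using assms(1) by (simp add: Supp_def)
  show "\<And>y. y \<in> wval \<rho> \<sigma> ` Supp l F \<Longrightarrow> y \<le> V" using assms(4) by (auto simp: Supp_def wsupp_def wv_def)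
  show "V \<in> wval \<rho> \<sigma> ` Supp l F" using assms(2,3) by (auto simp: Supp_def wsupp_def wv_def)
qed

lemma lead_supp: "wsupp (lead l \<rho> \<sigma> F) = {k. F k \<noteq> 0 \<and> wv l \<rho> \<sigma> k = vdeg l \<rho> \<sigma> F}"
  by (auto simp: wsupp_def lead_def wv_def)

lemma line_aux:
  fixes r t x y x0 y0 :: rat
  assumes "r > 0" "r + t > 0" "r*x + t*y = r*x0 + t*y0" "y0 \<le> y"
  shows "x - y \<le> x0 - y0 \<and> (x - y = x0 - y0 \<longrightarrow> y = y0 \<and> x = x0)"
proof -
  have e: "r*((x-y)-(x0-y0)) = -((r+t)*(y-y0))" using assms(3) by (simp add: algebra_simps)
  have "(r+t)*(y-y0) \<ge> 0" using assms by simp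
  then have "r*((x-y)-(x0-y0)) \<le> 0" using e by simp
  then have 1: "x - y \<le> x0 - y0" using assms(1) by (simp add: mult_le_0_iff)
  have 2: "x = x0" "y = y0" if "x - y = x0 - y0"
  proof -
    from that e have "(r+t)*(y-y0) = 0" by simp
    then show "y = y0" using assms(2) by simp
    with that show "x = x0" by simp
  qed
  from 1 2 show ?thesis by blast
qed

lemma st_char:
  assumes "l > 0" "\<rho> > 0" "\<rho> + \<sigma> > 0" "\<forall>k\<in>L. wv l \<rho> \<sigma> k = V" "k0 \<in> L"
    "\<forall>k\<in>L. snd k0 \<le> snd k"
  shows "st_of (wpt l ` L) = wpt l k0"
proof -
  have aux: "fst (wpt l k) - snd (wpt l k) \<le> fst (wpt l k0) - snd (wpt l k0) \<and>
     (fst (wpt l k) - snd (wpt l k) = fst (wpt l k0) - snd (wpt l k0) \<longrightarrow> wpt l k = wpt l k0)"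
    if "k \<in> L" for k
  proof -
    have "of_int \<rho> * fst (wpt l k) + of_int \<sigma> * snd (wpt l k)
        = of_int \<rho> * fst (wpt l k0) + of_int \<sigma> * snd (wpt l k0)"
      using assms(4,5) that by (simp add: wv_def wval_def)
    moreover have "snd (wpt l k0) \<le> snd (wpt l k)" using assms(6) that by (simp add: wpt_def)
    ultimately have "fst (wpt l k) - snd (wpt l k) \<le> fst (wpt l k0) - snd (wpt l k0) \<and>
     (fst (wpt l k) - snd (wpt l k) = fst (wpt l k0) - snd (wpt l k0) \<longrightarrow>
        snd (wpt l k) = snd (wpt l k0) \<and> fst (wpt l k) = fst (wpt l k0))"
      by (intro line_aux) (use assms in auto)
    then show ?thesis by (simp add: prod_eq_iff)
  qed
  show ?thesis
    unfolding st_of_def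
  proof (rule the_equality)
    show "wpt l k0 \<in> wpt l ` L \<and>
      (\<forall>q\<in>wpt l ` L. fst q - snd q \<le> fst (wpt l k0) - snd (wpt l k0)) \<and>
      (\<forall>q\<in>wpt l ` L. fst q - snd q = fst (wpt l k0) - snd (wpt l k0) \<longrightarrow> fst q \<le> fst (wpt l k0))"
      using aux assms(5) by fastforce
    fix p assume h: "p \<in> wpt l ` L \<and>
      (\<forall>q\<in>wpt l ` L. fst q - snd q \<le> fst p - snd p) \<and>
      (\<forall>q\<in>wpt l ` L. fst q - snd q = fst p - snd p \<longrightarrow> fst q \<le> fst p)"
    then obtain k where k: "k \<in> L" "p = wpt l k" by auto
    have "fst (wpt l k0) - snd (wpt l k0) \<le> fst p - snd p" using h assms(5) by auto
    with aux[OF k(1)] k(2) show "p = wpt l k0" by auto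
  qed
qed

lemma en_char:
  assumes "l > 0" "\<rho> > 0" "\<rho> + \<sigma> > 0" "\<forall>k\<in>L. wv l \<rho> \<sigma> k = V" "k0 \<in> L"
    "\<forall>k\<in>L. snd k \<le> snd k0"
  shows "en_of (wpt l ` L) = wpt l k0"
proof -
  have aux: "snd (wpt l k) - fst (wpt l k) \<le> snd (wpt l k0) - fst (wpt l k0) \<and>
     (snd (wpt l k) - fst (wpt l k) = snd (wpt l k0) - fst (wpt l k0) \<longrightarrow> wpt l k = wpt l k0)"
    if "k \<in> L" for k
  proof -
    have "of_int \<rho> * fst (wpt l k0) + of_int \<sigma> * snd (wpt l k0)
        = of_int \<rho> * fst (wpt l k) + of_int \<sigma> * snd (wpt l k)"
      using assms(4,5) that by (simp add: wv_def wval_def)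
    moreover have "snd (wpt l k) \<le> snd (wpt l k0)" using assms(6) that by (simp add: wpt_def)
    ultimately have "fst (wpt l k0) - snd (wpt l k0) \<le> fst (wpt l k) - snd (wpt l k) \<and>
     (fst (wpt l k0) - snd (wpt l k0) = fst (wpt l k) - snd (wpt l k) \<longrightarrow>
        snd (wpt l k0) = snd (wpt l k) \<and> fst (wpt l k0) = fst (wpt l k))"
      by (intro line_aux) (use assms in auto)
    then show ?thesis by (auto simp: prod_eq_iff)
  qed
  show ?thesis
    unfolding en_of_def
  proof (rule the_equality)
    show "wpt l k0 \<in> wpt l ` L \<and>
      (\<forall>q\<in>wpt l ` L. snd q - fst q \<le> snd (wpt l k0) - fst (wpt l k0)) \<and>
      (\<forall>q\<in>wpt l ` L. snd q - fst q = snd (wpt l k0) - fst (wpt l k0) \<longrightarrow> snd q \<le> snd (wpt l k0))"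
      using aux assms(5) by fastforce
    fix p assume h: "p \<in> wpt l ` L \<and>
      (\<forall>q\<in>wpt l ` L. snd q - fst q \<le> snd p - fst p) \<and>
      (\<forall>q\<in>wpt l ` L. snd q - fst q = snd p - fst p \<longrightarrow> snd q \<le> snd p)"
    then obtain k where k: "k \<in> L" "p = wpt l k" by auto
    have "snd (wpt l k0) - fst (wpt l k0) \<le> snd p - fst p" using h assms(5) by auto
    with aux[OF k(1)] k(2) show "p = wpt l k0" by auto
  qed
qed


definition tm :: "nat \<Rightarrow> (int \<times> nat \<Rightarrow> 'a::field_char_0) \<Rightarrow> (int \<times> nat \<Rightarrow> 'a) \<Rightarrow> int \<times> nat
   \<Rightarrow> int \<times> nat \<Rightarrow> int \<times> nat \<Rightarrow> nat \<Rightarrow> 'a" where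
  "tm l P Q k p q m = (if (fst p + fst q - int m * int l, snd p - m + snd q) = k
       then P p * Q q * wcoef l (fst q) (snd p) m else 0)"

definition NN :: "nat \<Rightarrow> (int \<times> nat \<Rightarrow> 'a::field_char_0) \<Rightarrow> (int \<times> nat \<Rightarrow> 'a) \<Rightarrow> int \<times> nat \<Rightarrow> 'a" where
  "NN l P Q k = (\<Sum>p\<in>wsupp P. \<Sum>q\<in>wsupp Q. \<Sum>m\<in>{1..snd p}. tm l P Q k p q m)"

definition M0 :: "nat \<Rightarrow> (int \<times> nat \<Rightarrow> 'a::field_char_0) \<Rightarrow> (int \<times> nat \<Rightarrow> 'a) \<Rightarrow> int \<times> nat \<Rightarrow> 'a" where
  "M0 l P Q k = (\<Sum>p\<in>wsupp P. \<Sum>q\<in>wsupp Q. tm l P Q k p q 0)"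

lemma wcoef0: "wcoef l i j 0 = 1" by (simp add: wcoef_def)
lemma wcoef1: "wcoef l i j (Suc 0) = of_nat j * of_rat (of_int i / of_nat l)" by (simp add: wcoef_def)

lemma wmult_split: "wmult l P Q k = M0 l P Q k + NN l P Q k"
proof -
  have s: "(\<Sum>m\<in>{..n}. f m) = f 0 + (\<Sum>m\<in>{1..n}. f m)" for n and f :: "nat \<Rightarrow> 'a"
  proof -
    have "{..n} = insert 0 {1..n}" by auto
    then show ?thesis by simp
  qed
  have "wmult l P Q k = (\<Sum>p\<in>wsupp P. \<Sum>q\<in>wsupp Q. \<Sum>m\<in>{..snd p}. tm l P Q k p q m)"
    unfolding wmult_def tm_def by (rule refl)
  also have "\<dots> = (\<Sum>p\<in>wsupp P. \<Sum>q\<in>wsupp Q. tm l P Q k p q 0 + (\<Sum>m\<in>{1..snd p}. tm l P Q k p q m))"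
    by (simp only: s)
  also have "\<dots> = M0 l P Q k + NN l P Q k"
    unfolding M0_def NN_def by (simp only: sum.distrib)
  finally show ?thesis .
qed

lemma M0_sym:
  assumes "finite (wsupp P)" "finite (wsupp Q)"
  shows "M0 l P Q k = M0 l Q P k"
  unfolding M0_def
  apply (subst sum.swap)
  apply (rule sum.cong[OF refl])
  apply (rule sum.cong[OF refl])
  apply (simp add: tm_def wcoef0 ac_simps)
  done

lemma wcomm_NN:
  assumes "finite (wsupp P)" "finite (wsupp Q)"
  shows "wcomm l P Q k = NN l P Q k - NN l Q P k"
  unfolding wcomm_def wmult_split using M0_sym[OF assms] by simp

lemma sum_nz: "sum f A \<noteq> 0 \<Longrightarrow> \<exists>x\<in>A. f x \<noteq> 0"
  by (meson sum.neutral)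

lemma tm_nz: "tm l P Q k p q m \<noteq> 0 \<Longrightarrow>
   k = (fst p + fst q - int m * int l, snd p - m + snd q) \<and> P p \<noteq> 0 \<and> Q q \<noteq> 0
   \<and> (wcoef l (fst q) (snd p) m :: 'a) \<noteq> 0"
  for P Q :: "int \<times> nat \<Rightarrow> 'a::field_char_0"
  by (auto simp: tm_def split: if_splits)

lemma NN_nz:
  assumes "NN l P Q k \<noteq> 0"
  shows "\<exists>p q m. P p \<noteq> 0 \<and> Q q \<noteq> 0 \<and> 1 \<le> m \<and> m \<le> snd p \<and>
     k = (fst p + fst q - int m * int l, snd p - m + snd q)"
proof -
  from sum_nz[OF assms[unfolded NN_def]] obtain p where p: "p \<in> wsupp P"
    "(\<Sum>q\<in>wsupp Q. \<Sum>m\<in>{1..snd p}. tm l P Q k p q m) \<noteq> 0" by blast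
  from sum_nz[OF p(2)] obtain q where q: "q \<in> wsupp Q"
    "(\<Sum>m\<in>{1..snd p}. tm l P Q k p q m) \<noteq> 0" by blast
  from sum_nz[OF q(2)] obtain m where m: "m \<in> {1..snd p}" "tm l P Q k p q m \<noteq> 0" by blast
  have "k = (fst p + fst q - int m * int l, snd p - m + snd q)" "P p \<noteq> 0" "Q q \<noteq> 0"
    using tm_nz[OF m(2)] by auto
  then show ?thesis using m(1) by (intro exI[of _ p] exI[of _ q] exI[of _ m]) auto
qed

lemma NN_bound:
  assumes "l > 0" "\<rho> + \<sigma> > 0" "finite (wsupp P)" "finite (wsupp Q)" "NN l P Q k \<noteq> 0"
  shows "wv l \<rho> \<sigma> k \<le> vdeg l \<rho> \<sigma> P + vdeg l \<rho> \<sigma> Q - of_int (\<rho> + \<sigma>)"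
proof -
  from NN_nz[OF assms(5)] obtain p q m where h: "P p \<noteq> 0" "Q q \<noteq> 0" "1 \<le> m" "m \<le> snd p"
     "k = (fst p + fst q - int m * int l, snd p - m + snd q)" by blast
  have "wv l \<rho> \<sigma> k = wv l \<rho> \<sigma> p + wv l \<rho> \<sigma> q - of_nat m * of_int (\<rho> + \<sigma>)"
    using wv_target[OF assms(1) h(4)] h(5) by simp
  moreover have "wv l \<rho> \<sigma> p \<le> vdeg l \<rho> \<sigma> P" by (rule vdeg_ge) (use assms h in auto)
  moreover have "wv l \<rho> \<sigma> q \<le> vdeg l \<rho> \<sigma> Q" by (rule vdeg_ge) (use assms h in auto)
  moreover have "1 * of_int (\<rho> + \<sigma>) \<le> (of_nat m * of_int (\<rho> + \<sigma>) :: rat)"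
    by (rule mult_right_mono) (use assms h in auto)
  ultimately show ?thesis by simp
qed

lemma lin1: "(k::rat) = p + q - M \<Longrightarrow> p \<le> P \<Longrightarrow> q \<le> Q \<Longrightarrow> 2 * x \<le> M \<Longrightarrow> 0 < x \<Longrightarrow> k = P + Q - x \<Longrightarrow> False"
  by linarith

lemma NN_top:
  assumes "l > 0" "\<rho> + \<sigma> > 0" "finite (wsupp P)" "finite (wsupp Q)"
    "wv l \<rho> \<sigma> k = vdeg l \<rho> \<sigma> P + vdeg l \<rho> \<sigma> Q - of_int (\<rho> + \<sigma>)"
  shows "NN l P Q k = (\<Sum>p\<in>wsupp P. \<Sum>q\<in>wsupp Q. tm l P Q k p q 1)"
  unfolding NN_def
proof (intro sum.cong refl)
  fix p q assume pq: "p \<in> wsupp P" "q \<in> wsupp Q"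
  show "(\<Sum>m\<in>{1..snd p}. tm l P Q k p q m) = tm l P Q k p q 1"
  proof (cases "snd p = 0")
    case True
    then show ?thesis by (simp add: tm_def wcoef1)
  next
    case False
    have z: "tm l P Q k p q m = 0" if "m \<in> {2..snd p}" for m
    proof (rule ccontr)
      assume "tm l P Q k p q m \<noteq> 0"
      from tm_nz[OF this] have kk: "k = (fst p + fst q - int m * int l, snd p - m + snd q)" by blast
      have e1: "wv l \<rho> \<sigma> k = wv l \<rho> \<sigma> p + wv l \<rho> \<sigma> q - of_nat m * of_int (\<rho> + \<sigma>)"
        using wv_target[OF assms(1), where m=m and p=p and q=q and \<rho>=\<rho> and \<sigma>=\<sigma>] that kk by simp
      have e2: "wv l \<rho> \<sigma> p \<le> vdeg l \<rho> \<sigma> P" by (rule vdeg_ge) (use assms pq in \<open>auto simp: wsupp_def\<close>)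
      have e3: "wv l \<rho> \<sigma> q \<le> vdeg l \<rho> \<sigma> Q" by (rule vdeg_ge) (use assms pq in \<open>auto simp: wsupp_def\<close>)
      have e4: "2 * of_int (\<rho> + \<sigma>) \<le> (of_nat m * of_int (\<rho> + \<sigma>) :: rat)"
        by (rule mult_right_mono) (use assms that in auto)
      have e5: "(0::rat) < of_int (\<rho> + \<sigma>)" using assms(2) by simp
      show False by (rule lin1[OF e1 e2 e3 e4 e5 assms(5)])
    qed
    have "{1..snd p} = insert 1 {2..snd p}" using False by auto
    then show ?thesis using z by simp
  qed
qed

lemma T1_nz:
  fixes P Q :: "int \<times> nat \<Rightarrow> 'a::field_char_0"
  assumes "l > 0" "finite (wsupp P)" "finite (wsupp Q)"
    "wv l \<rho> \<sigma> k = vdeg l \<rho> \<sigma> P + vdeg l \<rho> \<sigma> Q - of_int (\<rho> + \<sigma>)"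
    "tm l P Q k p q 1 \<noteq> 0"
  shows "wv l \<rho> \<sigma> p = vdeg l \<rho> \<sigma> P \<and> wv l \<rho> \<sigma> q = vdeg l \<rho> \<sigma> Q \<and> 1 \<le> snd p \<and>
    k = (fst p + fst q - int l, snd p - 1 + snd q) \<and> P p \<noteq> 0 \<and> Q q \<noteq> 0"
proof -
  from tm_nz[OF assms(5)] have h: "k = (fst p + fst q - int l, snd p - 1 + snd q)" "P p \<noteq> 0" "Q q \<noteq> 0"
    "(wcoef l (fst q) (snd p) 1 :: 'a) \<noteq> 0" by auto
  have sp: "1 \<le> snd p"
  proof (rule ccontr)
    assume "\<not> 1 \<le> snd p" then have "snd p = 0" by simp
    with h(4) show False by (simp add: wcoef1)
  qed
  have "wv l \<rho> \<sigma> k = wv l \<rho> \<sigma> p + wv l \<rho> \<sigma> q - of_nat 1 * of_int (\<rho> + \<sigma>)"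
    using wv_target[OF assms(1), where m=1 and p=p and q=q and \<rho>=\<rho> and \<sigma>=\<sigma>] sp h(1) by simp
  moreover have "wv l \<rho> \<sigma> p \<le> vdeg l \<rho> \<sigma> P" by (rule vdeg_ge) (use assms h in auto)
  moreover have "wv l \<rho> \<sigma> q \<le> vdeg l \<rho> \<sigma> Q" by (rule vdeg_ge) (use assms h in auto)
  ultimately show ?thesis using assms(4) h sp by simp
qed

lemma wcomm_finite:
  assumes "finite (wsupp P)" "finite (wsupp Q)"
  shows "finite (wsupp (wcomm l P Q))"
proof -
  have sub: "wsupp (wmult l A B) \<subseteq> (\<Union>p\<in>wsupp A. \<Union>q\<in>wsupp B. \<Union>m\<in>{..snd p}.
        {(fst p + fst q - int m * int l, snd p - m + snd q)})" for A B :: "int \<times> nat \<Rightarrow> 'a::field_char_0"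
  proof
    fix k assume "k \<in> wsupp (wmult l A B)"
    then have "(\<Sum>p\<in>wsupp A. \<Sum>q\<in>wsupp B. \<Sum>m\<in>{..snd p}. tm l A B k p q m) \<noteq> 0"
      by (simp add: wsupp_def wmult_def tm_def)
    from sum_nz[OF this] obtain p where p: "p \<in> wsupp A"
      "(\<Sum>q\<in>wsupp B. \<Sum>m\<in>{..snd p}. tm l A B k p q m) \<noteq> 0" by blast
    from sum_nz[OF p(2)] obtain q where q: "q \<in> wsupp B"
      "(\<Sum>m\<in>{..snd p}. tm l A B k p q m) \<noteq> 0" by blast
    from sum_nz[OF q(2)] obtain m where m: "m \<in> {..snd p}" "tm l A B k p q m \<noteq> 0" by blast
    have kk: "k = (fst p + fst q - int m * int l, snd p - m + snd q)" using tm_nz[OF m(2)] by auto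
    show "k \<in> (\<Union>p\<in>wsupp A. \<Union>q\<in>wsupp B. \<Union>m\<in>{..snd p}.
        {(fst p + fst q - int m * int l, snd p - m + snd q)})"
      by (rule UN_I[OF p(1)], rule UN_I[OF q(1)], rule UN_I[OF m(1)]) (simp add: kk)
  qed
  have "wsupp (wcomm l P Q) \<subseteq> wsupp (wmult l P Q) \<union> wsupp (wmult l Q P)"
    by (auto simp: wsupp_def wcomm_def)
  moreover have "finite (wsupp (wmult l P Q))" by (rule finite_subset[OF sub]) (use assms in auto)
  moreover have "finite (wsupp (wmult l Q P))" by (rule finite_subset[OF sub]) (use assms in auto)
  ultimately show ?thesis using finite_subset by blast
qed


lemma lin2: "(s::int)*b \<le> s*x \<Longrightarrow> s*d \<le> s*y \<Longrightarrow> s*(b+d-1) \<le> s*(x+y-1)"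
  by (simp add: algebra_simps)

lemma lin3:
  fixes s b d x y :: int
  assumes "s \<noteq> 0" "s*b \<le> s*x" "s*d \<le> s*y" "b + d = x + y"
  shows "b = x \<and> d = y"
proof -
  have "s*b + s*d = s*x + s*y" using assms(4) by (metis distrib_left)
  then have "s*b = s*x" using assms(2,3) by linarith
  then have "b = x" using assms(1) by simp
  then show ?thesis using assms(4) by simp
qed

lemma wv_inj:
  assumes "l > 0" "\<rho> \<noteq> 0" "wv l \<rho> \<sigma> p = wv l \<rho> \<sigma> p'" "snd p = snd p'"
  shows "p = p'"
proof -
  have "of_int \<rho> * (of_int (fst p) / of_nat l) = (of_int \<rho> * (of_int (fst p') / of_nat l) :: rat)"
    using assms(3,4) by (simp add: wv_simp)
  then have "fst p = fst p'" using assms(1,2) by simp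
  then show ?thesis using assms(4) by (simp add: prod_eq_iff)
qed

lemma sum_single:
  assumes "finite A" "x \<in> A" "\<And>y. y \<in> A \<Longrightarrow> y \<noteq> x \<Longrightarrow> f y = 0"
  shows "sum f A = f x"
proof -
  have "sum f A = sum f {x}"
    by (rule sum.mono_neutral_right) (use assms in auto)
  then show ?thesis by simp
qed

lemma key:
  fixes P Q :: "int \<times> nat \<Rightarrow> 'a::field_char_0" and s :: int
  assumes l: "l > 0" and rs: "\<rho> + \<sigma> > 0" and r: "\<rho> > 0"
    and fP: "finite (wsupp P)" and fQ: "finite (wsupp Q)" and s: "s \<noteq> 0"
    and p0: "P p0 \<noteq> 0" "wv l \<rho> \<sigma> p0 = vdeg l \<rho> \<sigma> P"
    and q0: "Q q0 \<noteq> 0" "wv l \<rho> \<sigma> q0 = vdeg l \<rho> \<sigma> Q"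
    and p0m: "\<forall>p. P p \<noteq> 0 \<and> wv l \<rho> \<sigma> p = vdeg l \<rho> \<sigma> P \<longrightarrow> s * int (snd p0) \<le> s * int (snd p)"
    and q0m: "\<forall>q. Q q \<noteq> 0 \<and> wv l \<rho> \<sigma> q = vdeg l \<rho> \<sigma> Q \<longrightarrow> s * int (snd q0) \<le> s * int (snd q)"
    and na: "\<not> aligned (wpt l p0) (wpt l q0)"
  defines "k0 \<equiv> (fst p0 + fst q0 - int l, nat (int (snd p0) + int (snd q0) - 1))"
  shows "wbracket l \<rho> \<sigma> P Q = lead l \<rho> \<sigma> (wcomm l P Q) \<and> wcomm l P Q k0 \<noteq> 0
     \<and> wv l \<rho> \<sigma> k0 = vdeg l \<rho> \<sigma> (wcomm l P Q)
     \<and> (\<forall>k. wcomm l P Q k \<noteq> 0 \<and> wv l \<rho> \<sigma> k = vdeg l \<rho> \<sigma> (wcomm l P Q) \<longrightarrow> s * int (snd k0) \<le> s * int (snd k))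
     \<and> wpt l p0 + wpt l q0 - (1, 1) = wpt l k0"
proof -
  obtain a b where ab: "p0 = (a, b)" by (cases p0)
  obtain c d where cd: "q0 = (c, d)" by (cases q0)
  define top where "top = vdeg l \<rho> \<sigma> P + vdeg l \<rho> \<sigma> Q - of_int (\<rho> + \<sigma>)"
  define C where "C = wcomm l P Q"
  have na': "(of_int a / of_nat l) * of_nat d - of_nat b * (of_int c / of_nat l) \<noteq> (0::rat)"
    using na by (simp add: aligned_def wpt_def ab cd)
  have bd: "1 \<le> b + d"
  proof (rule ccontr)
    assume "\<not> 1 \<le> b + d" then have "b = 0" "d = 0" by auto
    with na' show False by simp
  qed
  have k0eq: "k0 = (a + c - int l, nat (int b + int d - 1))" by (simp add: k0_def ab cd)
  have sk0: "int (snd k0) = int b + int d - 1" using bd by (simp add: k0eq)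
  have sk0r: "(of_nat (snd k0) :: rat) = of_nat b + of_nat d - 1"
  proof -
    have "(of_nat (snd k0) :: rat) = of_int (int (snd k0))" by simp
    also have "\<dots> = of_nat b + of_nat d - 1" using sk0 by simp
    finally show ?thesis .
  qed
  have fk0r: "(of_int (fst k0) / of_nat l :: rat) = of_int a / of_nat l + of_int c / of_nat l - 1"
    using l by (simp add: k0eq field_simps)
  have fC: "finite (wsupp C)" unfolding C_def by (rule wcomm_finite[OF fP fQ])
  have Cdef: "C k = NN l P Q k - NN l Q P k" for k unfolding C_def by (rule wcomm_NN[OF fP fQ])
  have topc: "vdeg l \<rho> \<sigma> Q + vdeg l \<rho> \<sigma> P - of_int (\<rho> + \<sigma>) = top" by (simp add: top_def)
  have A: "wv l \<rho> \<sigma> k \<le> top" if "C k \<noteq> 0" for k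
  proof -
    from that Cdef have "NN l P Q k \<noteq> 0 \<or> NN l Q P k \<noteq> 0" by auto
    then show ?thesis
    proof
      assume "NN l P Q k \<noteq> 0"
      from NN_bound[OF l rs fP fQ this] show ?thesis by (simp add: top_def)
    next
      assume "NN l Q P k \<noteq> 0"
      from NN_bound[OF l rs fQ fP this] show ?thesis using topc by simp
    qed
  qed
  have topk0: "wv l \<rho> \<sigma> k0 = top"
  proof -
    have "wv l \<rho> \<sigma> k0 = of_int \<rho> * (of_int a / of_nat l + of_int c / of_nat l - 1)
        + of_int \<sigma> * (of_nat b + of_nat d - 1)"
      by (simp only: wv_simp fk0r sk0r)
    also have "\<dots> = wv l \<rho> \<sigma> p0 + wv l \<rho> \<sigma> q0 - of_int (\<rho> + \<sigma>)"
      by (simp add: wv_simp ab cd algebra_simps)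
    finally show ?thesis using p0 q0 by (simp add: top_def)
  qed
  have Ctop: "C k = (\<Sum>p\<in>wsupp P. \<Sum>q\<in>wsupp Q. tm l P Q k p q 1)
                  - (\<Sum>q\<in>wsupp Q. \<Sum>p\<in>wsupp P. tm l Q P k q p 1)"
    if "wv l \<rho> \<sigma> k = top" for k
    using Cdef[of k] NN_top[OF l rs fP fQ, of k] NN_top[OF l rs fQ fP, of k] that topc
    by (simp add: top_def)
  have Cmin: "s * int (snd k0) \<le> s * int (snd k)" if "C k \<noteq> 0" "wv l \<rho> \<sigma> k = top" for k
  proof -
    from that Ctop have "(\<Sum>p\<in>wsupp P. \<Sum>q\<in>wsupp Q. tm l P Q k p q 1) \<noteq> 0
       \<or> (\<Sum>q\<in>wsupp Q. \<Sum>p\<in>wsupp P. tm l Q P k q p 1) \<noteq> 0" by auto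
    then show ?thesis
    proof
      assume "(\<Sum>p\<in>wsupp P. \<Sum>q\<in>wsupp Q. tm l P Q k p q 1) \<noteq> 0"
      from sum_nz[OF this] obtain p where p: "(\<Sum>q\<in>wsupp Q. tm l P Q k p q 1) \<noteq> 0" by blast
      from sum_nz[OF p] obtain q where q: "tm l P Q k p q 1 \<noteq> 0" by blast
      have h: "wv l \<rho> \<sigma> p = vdeg l \<rho> \<sigma> P \<and> wv l \<rho> \<sigma> q = vdeg l \<rho> \<sigma> Q \<and> 1 \<le> snd p \<and>
         k = (fst p + fst q - int l, snd p - 1 + snd q) \<and> P p \<noteq> 0 \<and> Q q \<noteq> 0"
        by (rule T1_nz[OF l fP fQ _ q]) (use that in \<open>simp add: top_def\<close>)
      then have sk: "int (snd k) = int (snd p) + int (snd q) - 1" by auto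
      have "s * int b \<le> s * int (snd p)" using p0m[rule_format, of p] h ab by auto
      moreover have "s * int d \<le> s * int (snd q)" using q0m[rule_format, of q] h cd by auto
      ultimately show ?thesis unfolding sk0 sk by (rule lin2)
    next
      assume "(\<Sum>q\<in>wsupp Q. \<Sum>p\<in>wsupp P. tm l Q P k q p 1) \<noteq> 0"
      from sum_nz[OF this] obtain q where q: "(\<Sum>p\<in>wsupp P. tm l Q P k q p 1) \<noteq> 0" by blast
      from sum_nz[OF q] obtain p where p: "tm l Q P k q p 1 \<noteq> 0" by blast
      have h: "wv l \<rho> \<sigma> q = vdeg l \<rho> \<sigma> Q \<and> wv l \<rho> \<sigma> p = vdeg l \<rho> \<sigma> P \<and> 1 \<le> snd q \<and>
         k = (fst q + fst p - int l, snd q - 1 + snd p) \<and> Q q \<noteq> 0 \<and> P p \<noteq> 0"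
        by (rule T1_nz[OF l fQ fP _ p]) (use that topc in simp)
      then have sk: "int (snd k) = int (snd p) + int (snd q) - 1" by auto
      have "s * int b \<le> s * int (snd p)" using p0m[rule_format, of p] h ab by auto
      moreover have "s * int d \<le> s * int (snd q)" using q0m[rule_format, of q] h cd by auto
      ultimately show ?thesis unfolding sk0 sk by (rule lin2)
    qed
  qed
  have uniq: "p = p0 \<and> q = q0"
    if "P p \<noteq> 0" "wv l \<rho> \<sigma> p = vdeg l \<rho> \<sigma> P" "Q q \<noteq> 0" "wv l \<rho> \<sigma> q = vdeg l \<rho> \<sigma> Q"
       "int (snd p) + int (snd q) = int b + int d" for p q
  proof -
    have "s * int b \<le> s * int (snd p)" using p0m[rule_format, of p] that ab by auto
    moreover have "s * int d \<le> s * int (snd q)" using q0m[rule_format, of q] that cd by auto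
    ultimately have "int b = int (snd p) \<and> int d = int (snd q)"
      using lin3[OF s] that(5) by metis
    then have "snd p = snd p0" "snd q = snd q0" using ab cd by auto
    then show ?thesis using wv_inj[OF l] r that p0 q0 by (metis less_irrefl)
  qed
  have S1: "(\<Sum>p\<in>wsupp P. \<Sum>q\<in>wsupp Q. tm l P Q k0 p q 1) = tm l P Q k0 p0 q0 1"
  proof -
    have z: "tm l P Q k0 p q 1 = 0" if "p \<in> wsupp P" "q \<in> wsupp Q" "\<not> (p = p0 \<and> q = q0)" for p q
    proof (rule ccontr)
      assume nz: "tm l P Q k0 p q 1 \<noteq> 0"
      have h: "wv l \<rho> \<sigma> p = vdeg l \<rho> \<sigma> P \<and> wv l \<rho> \<sigma> q = vdeg l \<rho> \<sigma> Q \<and> 1 \<le> snd p \<and>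
         k0 = (fst p + fst q - int l, snd p - 1 + snd q) \<and> P p \<noteq> 0 \<and> Q q \<noteq> 0"
        by (rule T1_nz[OF l fP fQ _ nz]) (use topk0 in \<open>simp add: top_def\<close>)
      then have "int (snd k0) = int (snd p) + int (snd q) - 1" by auto
      then have "int (snd p) + int (snd q) = int b + int d" using sk0 by simp
      with uniq h that(3) show False by blast
    qed
    have p0s: "p0 \<in> wsupp P" "q0 \<in> wsupp Q" using p0 q0 by (auto simp: wsupp_def)
    have "(\<Sum>p\<in>wsupp P. \<Sum>q\<in>wsupp Q. tm l P Q k0 p q 1) = (\<Sum>q\<in>wsupp Q. tm l P Q k0 p0 q 1)"
      by (rule sum_single[OF fP p0s(1)]) (rule sum.neutral, use z in auto)
    also have "\<dots> = tm l P Q k0 p0 q0 1"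
      by (rule sum_single[OF fQ p0s(2)]) (use z p0s in auto)
    finally show ?thesis .
  qed
  have S2: "(\<Sum>q\<in>wsupp Q. \<Sum>p\<in>wsupp P. tm l Q P k0 q p 1) = tm l Q P k0 q0 p0 1"
  proof -
    have z: "tm l Q P k0 q p 1 = 0" if "p \<in> wsupp P" "q \<in> wsupp Q" "\<not> (p = p0 \<and> q = q0)" for p q
    proof (rule ccontr)
      assume nz: "tm l Q P k0 q p 1 \<noteq> 0"
      have h: "wv l \<rho> \<sigma> q = vdeg l \<rho> \<sigma> Q \<and> wv l \<rho> \<sigma> p = vdeg l \<rho> \<sigma> P \<and> 1 \<le> snd q \<and>
         k0 = (fst q + fst p - int l, snd q - 1 + snd p) \<and> Q q \<noteq> 0 \<and> P p \<noteq> 0"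
        by (rule T1_nz[OF l fQ fP _ nz]) (use topk0 topc in simp)
      then have "int (snd k0) = int (snd p) + int (snd q) - 1" by auto
      then have "int (snd p) + int (snd q) = int b + int d" using sk0 by simp
      with uniq h that(3) show False by blast
    qed
    have p0s: "p0 \<in> wsupp P" "q0 \<in> wsupp Q" using p0 q0 by (auto simp: wsupp_def)
    have "(\<Sum>q\<in>wsupp Q. \<Sum>p\<in>wsupp P. tm l Q P k0 q p 1) = (\<Sum>p\<in>wsupp P. tm l Q P k0 q0 p 1)"
      by (rule sum_single[OF fQ p0s(2)]) (rule sum.neutral, use z in auto)
    also have "\<dots> = tm l Q P k0 q0 p0 1"
      by (rule sum_single[OF fP p0s(1)]) (use z p0s in auto)
    finally show ?thesis .
  qed
  have V1: "tm l P Q k0 p0 q0 1 = P p0 * Q q0 * (of_nat b * of_rat (of_int c / of_nat l))"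
  proof (cases "b = 0")
    case True then show ?thesis by (simp add: tm_def wcoef1 ab cd)
  next
    case False
    then have "(a + c - int 1 * int l, b - 1 + d) = k0" using bd by (simp add: k0eq)
    then show ?thesis by (simp add: tm_def wcoef1 ab cd)
  qed
  have V2: "tm l Q P k0 q0 p0 1 = Q q0 * P p0 * (of_nat d * of_rat (of_int a / of_nat l))"
  proof (cases "d = 0")
    case True then show ?thesis by (simp add: tm_def wcoef1 ab cd)
  next
    case False
    then have "(c + a - int 1 * int l, d - 1 + b) = k0" using bd by (simp add: k0eq)
    then show ?thesis by (simp add: tm_def wcoef1 ab cd)
  qed
  have Ck0v: "C k0 = P p0 * Q q0 * of_rat (of_nat b * (of_int c / of_nat l) - of_nat d * (of_int a / of_nat l))"
  proof -
    have e: "(of_rat (of_nat b * (of_int c / of_nat l) - of_nat d * (of_int a / of_nat l)) :: 'a)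
       = of_nat b * of_rat (of_int c / of_nat l) - of_nat d * of_rat (of_int a / of_nat l)"
      by (simp only: of_rat_diff of_rat_mult of_rat_of_nat_eq)
    have "C k0 = P p0 * Q q0 * (of_nat b * of_rat (of_int c / of_nat l))
        - Q q0 * P p0 * (of_nat d * of_rat (of_int a / of_nat l))"
      unfolding Ctop[OF topk0] S1 S2 V1 V2 by (rule refl)
    also have "\<dots> = P p0 * Q q0 * (of_nat b * of_rat (of_int c / of_nat l) - of_nat d * of_rat (of_int a / of_nat l))"
      by (simp add: algebra_simps)
    finally show ?thesis unfolding e .
  qed
  have Ck0: "C k0 \<noteq> 0"
  proof -
    have "of_nat b * (of_int c / of_nat l) - of_nat d * (of_int a / of_nat l) \<noteq> (0::rat)"
      using na' by (simp add: algebra_simps)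
    then show ?thesis using Ck0v p0 q0 by simp
  qed
  have vC: "vdeg l \<rho> \<sigma> C = top" by (rule vdeg_eq[OF fC Ck0 topk0 A])
  have wb: "wbracket l \<rho> \<sigma> P Q = lead l \<rho> \<sigma> C"
  proof -
    have "C \<noteq> (\<lambda>_. 0)" using Ck0 by auto
    then show ?thesis unfolding wbracket_def C_def[symmetric] using vC by (simp add: top_def)
  qed
  have pt: "wpt l p0 + wpt l q0 - (1, 1) = wpt l k0"
    using fk0r sk0r by (simp add: wpt_def ab cd)
  show ?thesis using wb Ck0 vC topk0 Cmin pt unfolding C_def by auto
qed


lemma ext_pt:
  fixes F :: "int \<times> nat \<Rightarrow> 'a::zero" and s :: int
  assumes "finite (wsupp F)" "F \<noteq> (\<lambda>_. 0)"
  shows "\<exists>p0. F p0 \<noteq> 0 \<and> wv l \<rho> \<sigma> p0 = vdeg l \<rho> \<sigma> F \<and>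
    (\<forall>p. F p \<noteq> 0 \<and> wv l \<rho> \<sigma> p = vdeg l \<rho> \<sigma> F \<longrightarrow> s * int (snd p0) \<le> s * int (snd p))"
proof -
  let ?L = "{k. F k \<noteq> 0 \<and> wv l \<rho> \<sigma> k = vdeg l \<rho> \<sigma> F}"
  have fin: "finite ?L" by (rule finite_subset[OF _ assms(1)]) (auto simp: wsupp_def)
  have ne: "?L \<noteq> {}" using vdeg_attained[OF assms, of l \<rho> \<sigma>] by auto
  let ?f = "\<lambda>k. s * int (snd k)"
  have "Min (?f ` ?L) \<in> ?f ` ?L" using fin ne by (intro Min_in) auto
  then obtain p0 where p0: "p0 \<in> ?L" "?f p0 = Min (?f ` ?L)" by auto
  have "\<forall>p\<in>?L. ?f p0 \<le> ?f p"
  proof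
    fix p assume "p \<in> ?L"
    then have "?f p \<in> ?f ` ?L" by (rule imageI)
    then have "Min (?f ` ?L) \<le> ?f p" using fin by (intro Min_le) auto
    then show "?f p0 \<le> ?f p" using p0(2) by simp
  qed
  then show ?thesis using p0(1) by blast
qed

lemma SuppL: "Supp l (lead l \<rho> \<sigma> F) = wpt l ` {k. F k \<noteq> 0 \<and> wv l \<rho> \<sigma> k = vdeg l \<rho> \<sigma> F}"
  by (simp add: Supp_def lead_supp)

theorem proposition2p4:
  fixes P Q R :: "int \<times> nat \<Rightarrow> 'a::field_char_0"
    and l :: nat and \<rho> \<sigma> :: int
  assumes "l > 0"
    and "is_W P" and "is_W Q" and "is_W R"
    and "P \<noteq> (\<lambda>_. 0)" and "Q \<noteq> (\<lambda>_. 0)" and "R \<noteq> (\<lambda>_. 0)"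
    and "coprime \<rho> \<sigma>" and "\<rho> + \<sigma> > 0" and "\<sigma> \<le> 0"
    and "wbracket l \<rho> \<sigma> P Q = lead l \<rho> \<sigma> R"
  shows "(\<not> aligned (wst l \<rho> \<sigma> P) (wst l \<rho> \<sigma> Q) \<longrightarrow>
            wst l \<rho> \<sigma> P + wst l \<rho> \<sigma> Q - (1, 1) = wst l \<rho> \<sigma> R)
       \<and> (\<not> aligned (wen l \<rho> \<sigma> P) (wen l \<rho> \<sigma> Q) \<longrightarrow>
            wen l \<rho> \<sigma> P + wen l \<rho> \<sigma> Q - (1, 1) = wen l \<rho> \<sigma> R)"
proof -
  have l: "l > 0" and rs: "\<rho> + \<sigma> > 0" using assms by auto
  have r: "\<rho> > 0" using assms(9,10) by linarith
  have fP: "finite (wsupp P)" and fQ: "finite (wsupp Q)" using assms(2,3) by (auto simp: is_W_def)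
  have part1: "wst l \<rho> \<sigma> P + wst l \<rho> \<sigma> Q - (1, 1) = wst l \<rho> \<sigma> R"
    if na0: "\<not> aligned (wst l \<rho> \<sigma> P) (wst l \<rho> \<sigma> Q)"
  proof -
    obtain p0 where p0: "P p0 \<noteq> 0" "wv l \<rho> \<sigma> p0 = vdeg l \<rho> \<sigma> P"
      "\<forall>p. P p \<noteq> 0 \<and> wv l \<rho> \<sigma> p = vdeg l \<rho> \<sigma> P \<longrightarrow> 1 * int (snd p0) \<le> 1 * int (snd p)"
      using ext_pt[OF fP assms(5), of l \<rho> \<sigma> 1] by blast
    obtain q0 where q0: "Q q0 \<noteq> 0" "wv l \<rho> \<sigma> q0 = vdeg l \<rho> \<sigma> Q"
      "\<forall>q. Q q \<noteq> 0 \<and> wv l \<rho> \<sigma> q = vdeg l \<rho> \<sigma> Q \<longrightarrow> 1 * int (snd q0) \<le> 1 * int (snd q)"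
      using ext_pt[OF fQ assms(6), of l \<rho> \<sigma> 1] by blast
    have stP: "wst l \<rho> \<sigma> P = wpt l p0" unfolding wst_def SuppL
      by (rule st_char[OF l r rs, where V="vdeg l \<rho> \<sigma> P"]) (use p0 in auto)
    have stQ: "wst l \<rho> \<sigma> Q = wpt l q0" unfolding wst_def SuppL
      by (rule st_char[OF l r rs, where V="vdeg l \<rho> \<sigma> Q"]) (use q0 in auto)
    define k0 where "k0 = (fst p0 + fst q0 - int l, nat (int (snd p0) + int (snd q0) - 1))"
    have K: "wbracket l \<rho> \<sigma> P Q = lead l \<rho> \<sigma> (wcomm l P Q) \<and> wcomm l P Q k0 \<noteq> 0
     \<and> wv l \<rho> \<sigma> k0 = vdeg l \<rho> \<sigma> (wcomm l P Q)
     \<and> (\<forall>k. wcomm l P Q k \<noteq> 0 \<and> wv l \<rho> \<sigma> k = vdeg l \<rho> \<sigma> (wcomm l P Q) \<longrightarrow> 1 * int (snd k0) \<le> 1 * int (snd k))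
     \<and> wpt l p0 + wpt l q0 - (1, 1) = wpt l k0"
      unfolding k0_def
      by (rule key[OF l rs r fP fQ _ p0(1,2) q0(1,2) p0(3) q0(3)]) (use na0 stP stQ in auto)
    have "lead l \<rho> \<sigma> R = lead l \<rho> \<sigma> (wcomm l P Q)" using K assms(11) by simp
    then have "wst l \<rho> \<sigma> R = st_of (Supp l (lead l \<rho> \<sigma> (wcomm l P Q)))" by (simp add: wst_def)
    also have "\<dots> = wpt l k0" unfolding SuppL
      by (rule st_char[OF l r rs, where V="vdeg l \<rho> \<sigma> (wcomm l P Q)"]) (use K in auto)
    finally show ?thesis using K stP stQ by simp
  qed
  have part2: "wen l \<rho> \<sigma> P + wen l \<rho> \<sigma> Q - (1, 1) = wen l \<rho> \<sigma> R"
    if na0: "\<not> aligned (wen l \<rho> \<sigma> P) (wen l \<rho> \<sigma> Q)"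
  proof -
    obtain p0 where p0: "P p0 \<noteq> 0" "wv l \<rho> \<sigma> p0 = vdeg l \<rho> \<sigma> P"
      "\<forall>p. P p \<noteq> 0 \<and> wv l \<rho> \<sigma> p = vdeg l \<rho> \<sigma> P \<longrightarrow> -1 * int (snd p0) \<le> -1 * int (snd p)"
      using ext_pt[OF fP assms(5), of l \<rho> \<sigma> "-1"] by blast
    obtain q0 where q0: "Q q0 \<noteq> 0" "wv l \<rho> \<sigma> q0 = vdeg l \<rho> \<sigma> Q"
      "\<forall>q. Q q \<noteq> 0 \<and> wv l \<rho> \<sigma> q = vdeg l \<rho> \<sigma> Q \<longrightarrow> -1 * int (snd q0) \<le> -1 * int (snd q)"
      using ext_pt[OF fQ assms(6), of l \<rho> \<sigma> "-1"] by blast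
    have stP: "wen l \<rho> \<sigma> P = wpt l p0" unfolding wen_def SuppL
      by (rule en_char[OF l r rs, where V="vdeg l \<rho> \<sigma> P"]) (use p0 in auto)
    have stQ: "wen l \<rho> \<sigma> Q = wpt l q0" unfolding wen_def SuppL
      by (rule en_char[OF l r rs, where V="vdeg l \<rho> \<sigma> Q"]) (use q0 in auto)
    define k0 where "k0 = (fst p0 + fst q0 - int l, nat (int (snd p0) + int (snd q0) - 1))"
    have K: "wbracket l \<rho> \<sigma> P Q = lead l \<rho> \<sigma> (wcomm l P Q) \<and> wcomm l P Q k0 \<noteq> 0
     \<and> wv l \<rho> \<sigma> k0 = vdeg l \<rho> \<sigma> (wcomm l P Q)
     \<and> (\<forall>k. wcomm l P Q k \<noteq> 0 \<and> wv l \<rho> \<sigma> k = vdeg l \<rho> \<sigma> (wcomm l P Q) \<longrightarrow> -1 * int (snd k0) \<le> -1 * int (snd k))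
     \<and> wpt l p0 + wpt l q0 - (1, 1) = wpt l k0"
      unfolding k0_def
      by (rule key[OF l rs r fP fQ _ p0(1,2) q0(1,2) p0(3) q0(3)]) (use na0 stP stQ in auto)
    have "lead l \<rho> \<sigma> R = lead l \<rho> \<sigma> (wcomm l P Q)" using K assms(11) by simp
    then have "wen l \<rho> \<sigma> R = en_of (Supp l (lead l \<rho> \<sigma> (wcomm l P Q)))" by (simp add: wen_def)
    also have "\<dots> = wpt l k0" unfolding SuppL
      by (rule en_char[OF l r rs, where V="vdeg l \<rho> \<sigma> (wcomm l P Q)"]) (use K in auto)
    finally show ?thesis using K stP stQ by simp
  qed
  show ?thesis using part1 part2 by blast
qed

end
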